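(* Let $(\mathbb V,g,J)$ be a (pseudo-)hermitian vector space and $A$ a hermitian endomorphism. Let $\varphi\in\mathcal K(\mathbb V)$ be an algebraic Kähler curvature tensor whose operator satisfies $[\varphi(X),A]=0$ for all $X\in\mathfrak u(g,J)$ (equivalently $[\varphi(x,y),A]=0$ for all $x,y\in\mathbb V$). Extend $\varphi$ complex-multilinearly to $\mathbb V^{\mathbb C}=\mathbb V\otimes_{\mathbb R}\mathbb C$ and, for each eigenvalue $\lambda$ of $A$, let $\mathbb V_\lambda\subseteq\mathbb V^{\mathbb C}$ be the generalized $\lambda$-eigenspace. Then $\varphi(x,y,u,v)=0$ whenever two of the vectors $x,y,u,v$ lie in $\mathbb V_\lambda$ and $\mathbb V_{\lambda'}$ respectively with $\lambda\ne\lambda'$ (and each of $x,y,u,v$ lies in some generalized eigenspace).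
   Context: (Pseudo-)hermitian vector space $(\mathbb V,g,J)$: nondegenerate symmetric $g$ of any signature, $J^2=-\mathrm{Id}$, $g(J\cdot,J\cdot)=g$; hermitian = $g$-symmetric, $J$-commuting; $\mathfrak u(g,J)$ = $g$-skew endomorphisms commuting with $J$. $\mathcal K(\mathbb V)$ is the space of $R\in\bigotimes^4\mathbb V^*$ with $R(x,y,u,v)=-R(y,x,u,v)=-R(x,y,v,u)$, $R(x,y,u,v)=R(u,v,x,y)$, $R(x,y,u,v)+R(x,v,y,u)+R(x,u,v,y)=0$, $R(x,y,u,v)=R(Jx,Jy,u,v)=R(x,y,Ju,Jv)$. Such $R$ is viewed as $(1,3)$ via $R(x,y,u,v)=g(x,R(u,v)y)$ and as an operator on $\mathfrak u(g,J)$ via $R(u\wedge_Jv)=4R(u,v)$, where $u\wedge v=g(u,\cdot)\otimes v-g(v,\cdot)\otimes u$, $u\wedge_Jv=u\wedge v+Ju\wedge Jv$. *)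

theory Defs
  imports "HOL-Analysis.Analysis"
begin

text \<open>The real vector space V is modelled as real^'n (any finite dimension).
  A 4-tensor R on V is given by its components R i j k l w.r.t. the standard basis.\<close>

definition gform :: "real^'n^'n \<Rightarrow> real^'n \<Rightarrow> real^'n \<Rightarrow> real" where
  "gform G x y = x \<bullet> (G *v y)"

definition pseudo_hermitian :: "real^'n^'n \<Rightarrow> real^'n^'n \<Rightarrow> bool" where
  "pseudo_hermitian G J \<longleftrightarrow>
     (\<forall>x y. gform G x y = gform G y x) \<and>
     (\<forall>x. (\<forall>y. gform G x y = 0) \<longrightarrow> x = 0) \<and>
     J ** J = - mat 1 \<and>
     (\<forall>x y. gform G (J *v x) (J *v y) = gform G x y)"

definition hermitian_endo :: "real^'n^'n \<Rightarrow> real^'n^'n \<Rightarrow> real^'n^'n \<Rightarrow> bool" where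
  "hermitian_endo G J A \<longleftrightarrow>
     (\<forall>x y. gform G (A *v x) y = gform G x (A *v y)) \<and> A ** J = J ** A"

definition tens4 :: "('n::finite \<Rightarrow> 'n \<Rightarrow> 'n \<Rightarrow> 'n \<Rightarrow> real) \<Rightarrow>
    real^'n \<Rightarrow> real^'n \<Rightarrow> real^'n \<Rightarrow> real^'n \<Rightarrow> real" where
  "tens4 R x y u v = (\<Sum>i\<in>UNIV. \<Sum>j\<in>UNIV. \<Sum>k\<in>UNIV. \<Sum>l\<in>UNIV.
       R i j k l * x$i * y$j * u$k * v$l)"

text \<open>Complex-multilinear extension to the complexification V^C = complex^'n.\<close>
definition tens4C :: "('n::finite \<Rightarrow> 'n \<Rightarrow> 'n \<Rightarrow> 'n \<Rightarrow> real) \<Rightarrow>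
    complex^'n \<Rightarrow> complex^'n \<Rightarrow> complex^'n \<Rightarrow> complex^'n \<Rightarrow> complex" where
  "tens4C R x y u v = (\<Sum>i\<in>UNIV. \<Sum>j\<in>UNIV. \<Sum>k\<in>UNIV. \<Sum>l\<in>UNIV.
       complex_of_real (R i j k l) * x$i * y$j * u$k * v$l)"

definition kaehler_curv :: "real^'n^'n \<Rightarrow> ('n::finite \<Rightarrow> 'n \<Rightarrow> 'n \<Rightarrow> 'n \<Rightarrow> real) \<Rightarrow> bool" where
  "kaehler_curv J R \<longleftrightarrow> (\<forall>x y u v.
     tens4 R x y u v = - tens4 R y x u v \<and>
     tens4 R x y u v = - tens4 R x y v u \<and>
     tens4 R x y u v = tens4 R u v x y \<and>
     tens4 R x y u v + tens4 R x v y u + tens4 R x u v y = 0 \<and>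
     tens4 R x y u v = tens4 R (J *v x) (J *v y) u v \<and>
     tens4 R x y u v = tens4 R x y (J *v u) (J *v v))"

definition curv_endo :: "real^'n^'n \<Rightarrow> ('n::finite \<Rightarrow> 'n \<Rightarrow> 'n \<Rightarrow> 'n \<Rightarrow> real) \<Rightarrow>
    real^'n \<Rightarrow> real^'n \<Rightarrow> real^'n^'n" where
  "curv_endo G R u v = (THE M. \<forall>x y. gform G x (M *v y) = tens4 R x y u v)"

definition cmat :: "real^'n^'m \<Rightarrow> complex^'n^'m" where
  "cmat A = (\<chi> i j. complex_of_real (A$i$j))"

definition is_eigenvalueC :: "real^'n^'n \<Rightarrow> complex \<Rightarrow> bool" where
  "is_eigenvalueC A lam \<longleftrightarrow> (\<exists>x. x \<noteq> 0 \<and> cmat A *v x = lam *s x)"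

definition gen_eigenspace :: "real^'n^'n \<Rightarrow> complex \<Rightarrow> (complex^'n) set" where
  "gen_eigenspace A lam =
     {x. \<exists>m::nat. ((\<lambda>z. cmat A *v z - lam *s z) ^^ m) x = 0}"

end

theory Submission
  imports Defs
begin

lemma sd: "(\<Sum>l\<in>UNIV. f l * (axis m (1::real) $ l)) = f m"
  by (simp add: axis_def if_distrib if_distribR cong del: if_weak_cong)

lemma tens4_axis: "tens4 R (axis i 1) (axis j 1) (axis k 1) (axis l 1) = R i j k l"
  unfolding tens4_def by (simp only: sd)

lemma tens4_bil: "tens4 R x y u v = x \<bullet> ((\<chi> i j. \<Sum>k\<in>UNIV. \<Sum>l\<in>UNIV. R i j k l * u$k * v$l) *v y)"
  unfolding tens4_def inner_vec_def matrix_vector_mult_def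
  apply (simp add: sum_distrib_left)
  apply (intro sum.cong refl)
  apply (simp add: sum_distrib_left sum_distrib_right)
  apply (intro sum.cong refl)
  apply (simp add: sum_distrib_left sum_distrib_right)
  done

lemma G_rinv:
  assumes "pseudo_hermitian G J"
  shows "\<exists>H. G ** H = mat 1"
proof -
  have "\<forall>x. transpose G *v x = 0 \<longrightarrow> x = 0"
  proof (intro allI impI)
    fix x assume h: "transpose G *v x = 0"
    have "\<forall>y. gform G x y = 0"
      using h by (simp add: gform_def dot_lmul_matrix[symmetric])
    then show "x = 0" using assms by (simp add: pseudo_hermitian_def)
  qed
  then have "\<exists>B. B ** transpose G = mat 1" by (simp add: matrix_left_invertible_ker)
  then show ?thesis using left_invertible_transpose by blast
qed

lemma curv_endo_prop:
  assumes "pseudo_hermitian G J"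
  shows "gform G x (curv_endo G R u v *v y) = tens4 R x y u v"
proof -
  obtain H where H: "G ** H = mat 1" using G_rinv[OF assms] by blast
  then have H': "H ** G = mat 1" using matrix_left_right_inverse by blast
  define T where "T = (\<chi> i j. \<Sum>k\<in>UNIV. \<Sum>l\<in>UNIV. R i j k l * u$k * v$l)"
  have ex: "\<forall>x y. gform G x ((H ** T) *v y) = tens4 R x y u v"
    by (simp add: gform_def tens4_bil T_def matrix_vector_mul_assoc matrix_mul_assoc H)
  have un: "M = H ** T" if "\<forall>x y. gform G x (M *v y) = tens4 R x y u v" for M
  proof -
    have "\<forall>y. G *v (M *v y) = T *v y"
    proof
      fix y
      have "\<forall>x. x \<bullet> (G *v (M *v y) - T *v y) = 0"
        using that by (simp add: gform_def tens4_bil T_def inner_diff_right)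
      then show "G *v (M *v y) = T *v y" by (metis inner_eq_zero_iff right_minus_eq)
    qed
    then have "\<forall>y. M *v y = (H ** T) *v y"
      by (metis H' matrix_vector_mul_assoc matrix_vector_mul_lid)
    then show ?thesis by (simp add: matrix_eq)
  qed
  have "\<forall>x y. gform G x (curv_endo G R u v *v y) = tens4 R x y u v"
    unfolding curv_endo_def
    apply (rule theI[where a="H ** T"])
     apply (rule ex)
    apply (erule un)
    done
  then show ?thesis by blast
qed

definition bil :: "complex^'n \<Rightarrow> complex^'n \<Rightarrow> complex" where
  "bil x y = (\<Sum>i\<in>UNIV. x$i * y$i)"

lemma cmat_mult: "cmat (A ** B) = cmat A ** cmat B"
  by (simp add: cmat_def matrix_matrix_mult_def vec_eq_iff)

lemma cmat_transpose: "cmat (transpose A) = transpose (cmat A)"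
  by (simp add: cmat_def transpose_def vec_eq_iff)

lemma bil_mult: "bil (C *v x) z = bil x (transpose C *v z)"
  unfolding bil_def matrix_vector_mult_def transpose_def
  apply (simp add: sum_distrib_left sum_distrib_right)
  apply (subst sum.swap)
  apply (intro sum.cong refl)
  apply (simp add: mult_ac)
  done

lemma bil_diff_left: "bil (p - a *s q) z = bil p z - a * bil q z"
  by (simp add: bil_def sum_subtractf sum_distrib_left algebra_simps)

lemma bil_diff_right: "bil x (p - b *s q) = bil x p - b * bil x q"
  by (simp add: bil_def sum_subtractf sum_distrib_left algebra_simps)

lemma bil_zero_left[simp]: "bil 0 z = 0" by (simp add: bil_def)
lemma bil_zero_right[simp]: "bil x 0 = 0" by (simp add: bil_def)

lemma gen_orth:
  fixes C K :: "complex^'n^'n"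
  assumes sym: "transpose C ** K = K ** C" and ab: "a \<noteq> b"
  shows "((\<lambda>z. C *v z - a *s z)^^m) x = 0 \<Longrightarrow> ((\<lambda>z. C *v z - b *s z)^^n) y = 0
         \<Longrightarrow> bil x (K *v y) = 0"
proof (induction m arbitrary: x n y)
  case 0
  then show ?case by simp
next
  case (Suc m)
  note outer = Suc.IH
  from Suc.prems show ?case
  proof (induction n arbitrary: y)
    case 0
    then show ?case by simp
  next
    case (Suc n)
    define f where "f = (\<lambda>z. C *v z - a *s z)"
    define g where "g = (\<lambda>z. C *v z - b *s z)"
    have fx: "((\<lambda>z. C *v z - a *s z)^^m) (f x) = 0"
      using Suc.prems(1) unfolding f_def by (simp add: funpow_Suc_right del: funpow.simps)
    have gy: "((\<lambda>z. C *v z - b *s z)^^n) (g y) = 0"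
      using Suc.prems(2) unfolding g_def by (simp add: funpow_Suc_right del: funpow.simps)
    have h1: "bil (f x) (K *v y) = 0" using outer[OF fx Suc.prems(2)] .
    have h2: "bil x (K *v g y) = 0" using Suc.IH[OF Suc.prems(1) gy] .
    have hc: "bil (C *v x) (K *v y) = bil x (K *v (C *v y))"
      by (simp add: bil_mult matrix_vector_mul_assoc sym)
    have e1: "bil (f x) (K *v y) = bil x (K *v (C *v y)) - a * bil x (K *v y)"
      unfolding f_def using hc by (simp add: bil_diff_left)
    have e2: "bil x (K *v g y) = bil x (K *v (C *v y)) - b * bil x (K *v y)"
      unfolding g_def by (simp add: matrix_vector_mult_diff_distrib vector_scalar_commute bil_diff_right)
    have "(b - a) * bil x (K *v y) = 0" using e1 e2 h1 h2 by (simp add: algebra_simps)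
    then show ?case using ab by simp
  qed
qed

lemma gen_pres:
  fixes A B :: "real^'n^'n"
  assumes "B ** A = A ** B" "z \<in> gen_eigenspace A lam"
  shows "cmat B *v z \<in> gen_eigenspace A lam"
proof -
  have comm: "(\<lambda>z. cmat A *v z - lam *s z) (cmat B *v w) = cmat B *v ((\<lambda>z. cmat A *v z - lam *s z) w)" for w
    by (simp add: matrix_vector_mul_assoc cmat_mult[symmetric] assms(1) matrix_vector_mult_diff_distrib vector_scalar_commute)
  have it: "((\<lambda>z. cmat A *v z - lam *s z)^^m) (cmat B *v w) = cmat B *v (((\<lambda>z. cmat A *v z - lam *s z)^^m) w)" for m w
    by (induction m) (simp_all add: comm)
  from assms(2) obtain m where "((\<lambda>z. cmat A *v z - lam *s z)^^m) z = 0" by (auto simp: gen_eigenspace_def)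
  then show ?thesis unfolding gen_eigenspace_def using it[of m z] by auto
qed

lemma sum4_swap:
  fixes f :: "'a::finite \<Rightarrow> 'a \<Rightarrow> 'a \<Rightarrow> 'a \<Rightarrow> 'b::comm_monoid_add"
  shows "(\<Sum>i\<in>UNIV. \<Sum>j\<in>UNIV. \<Sum>k\<in>UNIV. \<Sum>l\<in>UNIV. f i j k l) =
         (\<Sum>k\<in>UNIV. \<Sum>l\<in>UNIV. \<Sum>i\<in>UNIV. \<Sum>j\<in>UNIV. f i j k l)"
proof -
  have "(\<Sum>i\<in>UNIV. \<Sum>j\<in>UNIV. \<Sum>k\<in>UNIV. \<Sum>l\<in>UNIV. f i j k l) =
        (\<Sum>i\<in>UNIV. \<Sum>k\<in>UNIV. \<Sum>j\<in>UNIV. \<Sum>l\<in>UNIV. f i j k l)"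
    by (rule sum.cong[OF refl], rule sum.swap)
  also have "\<dots> = (\<Sum>k\<in>UNIV. \<Sum>i\<in>UNIV. \<Sum>j\<in>UNIV. \<Sum>l\<in>UNIV. f i j k l)"
    by (rule sum.swap)
  also have "\<dots> = (\<Sum>k\<in>UNIV. \<Sum>i\<in>UNIV. \<Sum>l\<in>UNIV. \<Sum>j\<in>UNIV. f i j k l)"
    by (rule sum.cong[OF refl], rule sum.cong[OF refl], rule sum.swap)
  also have "\<dots> = (\<Sum>k\<in>UNIV. \<Sum>l\<in>UNIV. \<Sum>i\<in>UNIV. \<Sum>j\<in>UNIV. f i j k l)"
    by (rule sum.cong[OF refl], rule sum.swap)
  finally show ?thesis .
qed

lemma sum3_cyc:
  fixes f :: "'a::finite \<Rightarrow> 'a \<Rightarrow> 'a \<Rightarrow> 'b::comm_monoid_add"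
  shows "(\<Sum>j\<in>UNIV. \<Sum>k\<in>UNIV. \<Sum>l\<in>UNIV. f j k l) =
         (\<Sum>k\<in>UNIV. \<Sum>l\<in>UNIV. \<Sum>j\<in>UNIV. f j k l)"
proof -
  have "(\<Sum>j\<in>UNIV. \<Sum>k\<in>UNIV. \<Sum>l\<in>UNIV. f j k l) = (\<Sum>k\<in>UNIV. \<Sum>j\<in>UNIV. \<Sum>l\<in>UNIV. f j k l)"
    by (rule sum.swap)
  also have "\<dots> = (\<Sum>k\<in>UNIV. \<Sum>l\<in>UNIV. \<Sum>j\<in>UNIV. f j k l)"
    by (rule sum.cong[OF refl], rule sum.swap)
  finally show ?thesis .
qed

lemma comp_pair:
  assumes "kaehler_curv J R"
  shows "R i j k l = R k l i j"
  using assms unfolding kaehler_curv_def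
  by (metis tens4_axis)

lemma comp_bianchi:
  assumes "kaehler_curv J R"
  shows "R i j k l + R i l j k + R i k l j = 0"
  using assms unfolding kaehler_curv_def
  by (metis tens4_axis)

lemma tens4C_pair:
  assumes "kaehler_curv J R"
  shows "tens4C R u v x y = tens4C R x y u v"
proof -
  have "tens4C R u v x y = (\<Sum>k\<in>UNIV. \<Sum>l\<in>UNIV. \<Sum>i\<in>UNIV. \<Sum>j\<in>UNIV.
       complex_of_real (R i j k l) * u$i * v$j * x$k * y$l)"
    unfolding tens4C_def by (rule sum4_swap)
  also have "\<dots> = tens4C R x y u v"
    unfolding tens4C_def
    by (intro sum.cong refl) (simp add: comp_pair[OF assms, of _ _ "_::'a"] mult_ac)
  finally show ?thesis .
qed

lemma tens4C_bianchi:
  assumes "kaehler_curv J R"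
  shows "tens4C R x y u v + tens4C R x v y u + tens4C R x u v y = 0"
proof -
  have e1: "tens4C R x v y u = (\<Sum>i\<in>UNIV. \<Sum>j\<in>UNIV. \<Sum>k\<in>UNIV. \<Sum>l\<in>UNIV.
       complex_of_real (R i l j k) * x$i * y$j * u$k * v$l)"
    unfolding tens4C_def
    apply (rule sum.cong[OF refl])
    apply (subst sum3_cyc)
    apply (intro sum.cong refl)
    apply (simp add: mult_ac)
    done
  have e2: "tens4C R x u v y = (\<Sum>i\<in>UNIV. \<Sum>j\<in>UNIV. \<Sum>k\<in>UNIV. \<Sum>l\<in>UNIV.
       complex_of_real (R i k l j) * x$i * y$j * u$k * v$l)"
    unfolding tens4C_def
    apply (rule sum.cong[OF refl])
    apply (subst (2) sum3_cyc)
    apply (intro sum.cong refl)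
    apply (simp add: mult_ac)
    done
  have "tens4C R x y u v + tens4C R x v y u + tens4C R x u v y =
     (\<Sum>i\<in>UNIV. \<Sum>j\<in>UNIV. \<Sum>k\<in>UNIV. \<Sum>l\<in>UNIV.
       complex_of_real (R i j k l + R i l j k + R i k l j) * x$i * y$j * u$k * v$l)"
    unfolding e1 e2 unfolding tens4C_def
    by (simp add: sum.distrib[symmetric] algebra_simps)
  also have "\<dots> = 0" by (simp add: comp_bianchi[OF assms])
  finally show ?thesis .
qed

lemma herm_mat:
  assumes "hermitian_endo G J A"
  shows "transpose A ** G = G ** A"
proof -
  have h: "\<forall>x y. (A *v x) \<bullet> (G *v y) = x \<bullet> (G *v (A *v y))"
    using assms by (simp add: hermitian_endo_def gform_def)
  have "\<forall>y. (transpose A ** G) *v y = (G ** A) *v y"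
  proof
    fix y
    have "\<forall>x. x \<bullet> ((transpose A ** G) *v y - (G ** A) *v y) = 0"
    proof
      fix x
      have "(A *v x) \<bullet> (G *v y) = x \<bullet> (transpose A *v (G *v y))"
        by (metis dot_lmul_matrix inner_commute transpose_matrix_vector)
      then show "x \<bullet> ((transpose A ** G) *v y - (G ** A) *v y) = 0"
        using h by (simp add: inner_diff_right matrix_vector_mul_assoc)
    qed
    then show "(transpose A ** G) *v y = (G ** A) *v y"
      by (metis inner_eq_zero_iff right_minus_eq)
  qed
  then show ?thesis by (simp add: matrix_eq)
qed

lemma comp_endo:
  assumes "pseudo_hermitian G J"
  shows "R i j k l = (G ** curv_endo G R (axis k 1) (axis l 1)) $ i $ j"
proof -
  have "R i j k l = gform G (axis i 1) (curv_endo G R (axis k 1) (axis l 1) *v axis j 1)"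
    by (simp add: curv_endo_prop[OF assms] tens4_axis)
  also have "\<dots> = (G ** curv_endo G R (axis k 1) (axis l 1)) $ i $ j"
    unfolding gform_def matrix_vector_mul_assoc by (simp add: inner_axis' matrix_vector_mult_basis column_def)
  finally show ?thesis .
qed

lemma tens4C_expand:
  assumes "pseudo_hermitian G J"
  shows "tens4C R x y u v = (\<Sum>k\<in>UNIV. \<Sum>l\<in>UNIV. u$k * v$l *
      bil x (cmat G *v (cmat (curv_endo G R (axis k 1) (axis l 1)) *v y)))"
proof -
  have "tens4C R x y u v = (\<Sum>k\<in>UNIV. \<Sum>l\<in>UNIV. \<Sum>i\<in>UNIV. \<Sum>j\<in>UNIV.
       complex_of_real (R i j k l) * x$i * y$j * u$k * v$l)"
    unfolding tens4C_def by (rule sum4_swap)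
  also have "\<dots> = (\<Sum>k\<in>UNIV. \<Sum>l\<in>UNIV. u$k * v$l *
      bil x (cmat (G ** curv_endo G R (axis k 1) (axis l 1)) *v y))"
    unfolding bil_def matrix_vector_mult_def cmat_def
    apply (intro sum.cong refl)
    apply (simp add: sum_distrib_left)
    apply (intro sum.cong refl)
    apply (simp add: mult_ac comp_endo[OF assms, of R])
    done
  finally show ?thesis by (simp add: cmat_mult matrix_vector_mul_assoc)
qed

lemma F:
  assumes ph: "pseudo_hermitian G J" and he: "hermitian_endo G J A"
    and comm: "\<forall>p q. curv_endo G R p q ** A = A ** curv_endo G R p q"
    and x: "x \<in> gen_eigenspace A a" and y: "y \<in> gen_eigenspace A b" and ab: "a \<noteq> b"
  shows "tens4C R x y u v = 0"
proof -
  have sym: "transpose (cmat A) ** cmat G = cmat G ** cmat A"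
    using herm_mat[OF he] by (metis cmat_mult cmat_transpose)
  have "bil x (cmat G *v (cmat (curv_endo G R (axis k 1) (axis l 1)) *v y)) = 0" for k l
  proof -
    have "cmat (curv_endo G R (axis k 1) (axis l 1)) *v y \<in> gen_eigenspace A b"
      using gen_pres comm y by blast
    then obtain n where n: "((\<lambda>z. cmat A *v z - b *s z)^^n) (cmat (curv_endo G R (axis k 1) (axis l 1)) *v y) = 0"
      by (auto simp: gen_eigenspace_def)
    obtain m where m: "((\<lambda>z. cmat A *v z - a *s z)^^m) x = 0" using x by (auto simp: gen_eigenspace_def)
    show ?thesis using gen_orth[OF sym ab m n] .
  qed
  then show ?thesis by (simp add: tens4C_expand[OF ph])
qed

theorem mainTheorem7:
  fixes G J A :: "real^'n^'n"
    and phi :: "'n \<Rightarrow> 'n \<Rightarrow> 'n \<Rightarrow> 'n \<Rightarrow> real"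
    and x y u v :: "complex^'n"
    and a b c d :: complex
  assumes "pseudo_hermitian G J"
    and "hermitian_endo G J A"
    and "kaehler_curv J phi"
    and "\<forall>p q. curv_endo G phi p q ** A = A ** curv_endo G phi p q"
    and "is_eigenvalueC A a" "is_eigenvalueC A b" "is_eigenvalueC A c" "is_eigenvalueC A d"
    and "x \<in> gen_eigenspace A a" "y \<in> gen_eigenspace A b"
    and "u \<in> gen_eigenspace A c" "v \<in> gen_eigenspace A d"
    and "\<not> (a = b \<and> b = c \<and> c = d)"
  shows "tens4C phi x y u v = 0"
proof (cases "a = b")
  case False
  then show ?thesis using F[OF assms(1,2,4,9,10)] by blast
next
  case ab: True
  show ?thesis
  proof (cases "c = d")
    case False
    then have "tens4C phi u v x y = 0" using F[OF assms(1,2,4,11,12)] by blast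
    then show ?thesis using tens4C_pair[OF assms(3)] by simp
  next
    case True
    then have ac: "a \<noteq> c" "a \<noteq> d" using ab assms(13) by auto
    have "tens4C phi x v y u = 0" using F[OF assms(1,2,4,9,12) ac(2)] .
    moreover have "tens4C phi x u v y = 0" using F[OF assms(1,2,4,9,11) ac(1)] .
    ultimately show ?thesis using tens4C_bianchi[OF assms(3), of x y u v] by simp
  qed
qed

end
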